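(* Suppose $\ell\in\mathcal{D}^-[0,\infty)$, $r\in\mathcal{D}^+[0,\infty)$ and $\psi\in\mathcal{D}[0,\infty)$ are piecewise constant, each with a finite number of jumps, and $\ell\le r$. Then the pair $(\psi-\Xi_{\ell,r}(\psi),\,-\Xi_{\ell,r}(\psi))$ is the unique solution to the ESP on $[\ell(\cdot),r(\cdot)]$ for $\psi$, where for $t\ge0$ $$\Xi_{\ell,r}(\psi)(t)=\max\Big(\big[(\psi(0)-r(0))^+\wedge\inf_{u\in[0,t]}(\psi(u)-\ell(u))\big],\ \sup_{s\in[0,t]}\big[(\psi(s)-r(s))\wedge\inf_{u\in[s,t]}(\psi(u)-\ell(u))\big]\Big).$$
   Context: $\mathcal{D}[0,\infty)$ denotes the càdlàg functions $[0,\infty)\to(-\infty,\infty)$; $\mathcal{D}^-[0,\infty)$ (resp. $\mathcal{D}^+[0,\infty)$) denotes càdlàg functions with values in $[-\infty,\infty)$ (resp. $(-\infty,\infty]$); $a\wedge b=\min\{a,b\}$, $a^+=\max\{a,0\}$. ESP: $(\phi,\eta)\in\mathcal{D}[0,\infty)^2$ solves the ESP on $[\ell(\cdot),r(\cdot)]$ for $\psi$ if (1) $\phi(t)=\psi(t)+\eta(t)\in[\ell(t),r(t)]$ for all $t\ge0$; (2) for all $0\le s\le t$: $\eta(t)-\eta(s)\ge0$ if $\phi(u)<r(u)$ for all $u\in(s,t]$, and $\eta(t)-\eta(s)\le0$ if $\phi(u)>\ell(u)$ for all $u\in(s,t]$; (3) for all $t\ge0$: $\eta(t)-\eta(t-)\ge0$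 if $\phi(t)<r(t)$, and $\eta(t)-\eta(t-)\le0$ if $\phi(t)>\ell(t)$, where $\eta(0-)=0$. *)

theory Defs
  imports "HOL-Analysis.Analysis" "HOL-Library.Extended_Real"
begin

definition cadlag :: "(real \<Rightarrow> 'a::topological_space) \<Rightarrow> bool" where
  "cadlag f \<longleftrightarrow> (\<forall>t\<ge>0. (f \<longlongrightarrow> f t) (at_right t)) \<and>
                (\<forall>t>0. \<exists>L. (f \<longlongrightarrow> L) (at_left t))"

definition piecewise_const :: "(real \<Rightarrow> 'a) \<Rightarrow> bool" where
  "piecewise_const f \<longleftrightarrow> (\<exists>S. finite S \<and>
      (\<forall>s t. 0 \<le> s \<longrightarrow> s \<le> t \<longrightarrow> {s<..t} \<inter> S = {} \<longrightarrow> f s = f t))"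

definition left_lim :: "(real \<Rightarrow> real) \<Rightarrow> real \<Rightarrow> real" where
  "left_lim \<eta> t = (if t = 0 then 0 else Lim (at_left t) \<eta>)"

definition ESP :: "(real \<Rightarrow> ereal) \<Rightarrow> (real \<Rightarrow> ereal) \<Rightarrow> (real \<Rightarrow> real)
                   \<Rightarrow> (real \<Rightarrow> real) \<Rightarrow> (real \<Rightarrow> real) \<Rightarrow> bool" where
  "ESP l r \<psi> \<phi> \<eta> \<longleftrightarrow>
     cadlag \<phi> \<and> cadlag \<eta> \<and>
     (\<forall>t\<ge>0. \<phi> t = \<psi> t + \<eta> t \<and> l t \<le> ereal (\<phi> t) \<and> ereal (\<phi> t) \<le> r t) \<and>
     (\<forall>s t. 0 \<le> s \<longrightarrow> s \<le> t \<longrightarrow>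
        ((\<forall>u\<in>{s<..t}. ereal (\<phi> u) < r u) \<longrightarrow> \<eta> t - \<eta> s \<ge> 0) \<and>
        ((\<forall>u\<in>{s<..t}. ereal (\<phi> u) > l u) \<longrightarrow> \<eta> t - \<eta> s \<le> 0)) \<and>
     (\<forall>t\<ge>0. (ereal (\<phi> t) < r t \<longrightarrow> \<eta> t - left_lim \<eta> t \<ge> 0) \<and>
             (ereal (\<phi> t) > l t \<longrightarrow> \<eta> t - left_lim \<eta> t \<le> 0))"

definition Xi :: "(real \<Rightarrow> ereal) \<Rightarrow> (real \<Rightarrow> ereal) \<Rightarrow> (real \<Rightarrow> real) \<Rightarrow> real \<Rightarrow> ereal" where
  "Xi l r \<psi> t =
     max (min (max (ereal (\<psi> 0) - r 0) 0) (INF u\<in>{0..t}. ereal (\<psi> u) - l u))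
         (SUP s\<in>{0..t}. min (ereal (\<psi> s) - r s) (INF u\<in>{s..t}. ereal (\<psi> u) - l u))"

end

theory Submission
  imports Defs
begin


definition Xg :: "ereal \<Rightarrow> (real \<Rightarrow> ereal) \<Rightarrow> (real \<Rightarrow> ereal) \<Rightarrow> real \<Rightarrow> ereal" where
  "Xg c f g t = max (min c (INF u\<in>{0..t}. f u)) (SUP s\<in>{0..t}. min (g s) (INF u\<in>{s..t}. f u))"

lemma INF_split:
  fixes f :: "real \<Rightarrow> ereal"
  assumes "a \<le> s" "s \<le> t"
  shows "(INF u\<in>{a..t}. f u) = min (INF u\<in>{a..s}. f u) (INF u\<in>{s..t}. f u)"
proof -
  have "{a..t} = {a..s} \<union> {s..t}" using assms by auto
  then show ?thesis by (simp add: INF_union inf_min)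
qed

lemma SUP_split:
  fixes f :: "real \<Rightarrow> ereal"
  assumes "a \<le> s" "s \<le> t"
  shows "(SUP u\<in>{a..t}. f u) = max (SUP u\<in>{a..s}. f u) (SUP u\<in>{s..t}. f u)"
proof -
  have "{a..t} = {a..s} \<union> {s..t}" using assms by auto
  then show ?thesis by (simp add: SUP_union sup_max)
qed

lemma lin_aux2:
  fixes c a i m M :: ereal
  shows "max (min c (min a i)) (max (min i m) M) = max (min (max (min c a) m) i) M"
proof -
  have "min (max (min c a) m) i = max (min (min c a) i) (min m i)"
    using inf_sup_distrib2[of "min c a" m i] by (simp add: inf_min sup_max)
  then show ?thesis by (simp add: ac_simps)
qed

lemma Xg_semi:
  assumes "0 \<le> s" "s \<le> t"
  shows "Xg c f g t = max (min (Xg c f g s) (INF u\<in>{s..t}. f u))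
                          (SUP v\<in>{s..t}. min (g v) (INF u\<in>{v..t}. f u))"
proof -
  define Ist where "Ist = (INF u\<in>{s..t}. f u)"
  define I0s where "I0s = (INF u\<in>{0..s}. f u)"
  define M0 where "M0 = (SUP v\<in>{0..s}. min (g v) (INF u\<in>{v..s}. f u))"
  define Mst where "Mst = (SUP v\<in>{s..t}. min (g v) (INF u\<in>{v..t}. f u))"
  have I0: "(INF u\<in>{0..t}. f u) = min I0s Ist"
    unfolding Ist_def I0s_def by (rule INF_split[OF assms])
  have "(SUP v\<in>{0..t}. min (g v) (INF u\<in>{v..t}. f u)) =
        max (SUP v\<in>{0..s}. min (g v) (INF u\<in>{v..t}. f u)) Mst"
    unfolding Mst_def by (rule SUP_split[OF assms])
  also have "(SUP v\<in>{0..s}. min (g v) (INF u\<in>{v..t}. f u)) =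
             (SUP v\<in>{0..s}. min Ist (min (g v) (INF u\<in>{v..s}. f u)))"
  proof (rule SUP_cong)
    fix v assume v: "v \<in> {0..s}"
    have "(INF u\<in>{v..t}. f u) = min (INF u\<in>{v..s}. f u) Ist"
      unfolding Ist_def using v assms by (intro INF_split) auto
    then show "min (g v) (INF u\<in>{v..t}. f u) = min Ist (min (g v) (INF u\<in>{v..s}. f u))"
      by (simp add: ac_simps)
  qed simp
  also have "\<dots> = min Ist M0"
    unfolding M0_def by (rule inf_SUP[of Ist "\<lambda>v. min (g v) (INF u\<in>{v..s}. f u)" "{0..s}", unfolded inf_min, symmetric])
  finally have S: "(SUP v\<in>{0..t}. min (g v) (INF u\<in>{v..t}. f u)) = max (min Ist M0) Mst" .
  have Xs: "Xg c f g s = max (min c I0s) M0" unfolding Xg_def M0_def I0s_def by (rule refl)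
  have Xt: "Xg c f g t = max (min c (INF u\<in>{0..t}. f u)) (SUP v\<in>{0..t}. min (g v) (INF u\<in>{v..t}. f u))"
    unfolding Xg_def by (rule refl)
  show ?thesis unfolding Xt I0 S Xs Ist_def[symmetric] Mst_def[symmetric]
    by (rule lin_aux2)
qed

lemma Xg_bounds:
  assumes "0 \<le> t" "g t \<le> f t"
  shows "g t \<le> Xg c f g t" "Xg c f g t \<le> f t"
proof -
  have "min (g t) (INF u\<in>{t..t}. f u) \<le> (SUP s\<in>{0..t}. min (g s) (INF u\<in>{s..t}. f u))"
    by (rule SUP_upper) (use assms in auto)
  moreover have "(INF u\<in>{t..t}. f u) = f t" by simp
  ultimately show "g t \<le> Xg c f g t" using assms unfolding Xg_def
    by (metis max.coboundedI2 min.absorb1)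
  have "(INF u\<in>{0..t}. f u) \<le> f t" by (rule INF_lower) (use assms in auto)
  moreover have "(SUP s\<in>{0..t}. min (g s) (INF u\<in>{s..t}. f u)) \<le> f t"
  proof (rule SUP_least)
    fix s assume "s \<in> {0..t}"
    then have "(INF u\<in>{s..t}. f u) \<le> f t" by (intro INF_lower) auto
    then show "min (g s) (INF u\<in>{s..t}. f u) \<le> f t" by (simp add: min.coboundedI2)
  qed
  ultimately show "Xg c f g t \<le> f t" unfolding Xg_def by (simp add: min.coboundedI2)
qed

lemma Xg_const:
  assumes "0 \<le> s" "s \<le> t" and fc: "\<forall>u\<in>{s..t}. f u = f s \<and> g u = g s" and gf: "g s \<le> f s"
  shows "Xg c f g t = Xg c f g s"
proof -
  have I: "\<And>v. v \<in> {s..t} \<Longrightarrow> (INF u\<in>{v..t}. f u) = f s"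
  proof -
    fix v assume v: "v \<in> {s..t}"
    have "(INF u\<in>{v..t}. f u) = (INF u\<in>{v..t}. f s)"
    proof (rule INF_cong)
      fix u assume "u \<in> {v..t}" then have "u \<in> {s..t}" using v by auto
      then show "f u = f s" using fc by blast
    qed simp
    then show "(INF u\<in>{v..t}. f u) = f s" using v by simp
  qed
  have M: "(SUP v\<in>{s..t}. min (g v) (INF u\<in>{v..t}. f u)) = g s"
  proof -
    have "(SUP v\<in>{s..t}. min (g v) (INF u\<in>{v..t}. f u)) = (SUP v\<in>{s..t}. g s)"
    proof (rule SUP_cong)
      fix v assume v: "v \<in> {s..t}"
      then have "g v = g s" using fc by blast
      then show "min (g v) (INF u\<in>{v..t}. f u) = g s" using I[OF v] gf by (simp add: min.absorb1)
    qed simp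
    then show ?thesis using assms(1,2) by simp
  qed
  have B: "g s \<le> Xg c f g s" "Xg c f g s \<le> f s" using Xg_bounds[of s g f c] assms(1,2) gf by auto
  have "s \<in> {s..t}" using assms(1,2) gf by auto
  then have "(INF u\<in>{s..t}. f u) = f s" using I by blast
  then show ?thesis unfolding Xg_semi[OF assms(1,2)] M using B
    by (simp add: min.absorb1 max.absorb1)
qed

lemma lin_aux1:
  fixes x g fs fT gT :: "'a::linorder"
  assumes "g \<le> x" "x \<le> fs"
  shows "max (min x (min fs fT)) (max (min g (min fs fT)) gT) = max (min x fT) gT"
proof -
  have 1: "min x (min fs fT) = min x fT" using assms by (simp add: min.absorb1 min.assoc[symmetric])
  have 2: "min g (min fs fT) \<le> min x fT" by (rule min.mono[OF assms(1) min.cobounded2])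
  show ?thesis unfolding 1 using 2 by (simp add: max.assoc[symmetric] max.absorb1)
qed

lemma Xg_jump:
  assumes "0 \<le> s" "s < T" and fc: "\<forall>u\<in>{s..<T}. f u = f s \<and> g u = g s" and gf: "g s \<le> f s" "g T \<le> f T"
  shows "Xg c f g T = max (min (Xg c f g s) (f T)) (g T)"
proof -
  have I: "\<And>v. v \<in> {s..<T} \<Longrightarrow> (INF u\<in>{v..T}. f u) = min (f s) (f T)"
  proof -
    fix v assume v: "v \<in> {s..<T}"
    have "{v..T} = {v..<T} \<union> {T}" using v by auto
    then have "(INF u\<in>{v..T}. f u) = min (f T) (INF u\<in>{v..<T}. f u)" by (simp add: inf_min)
    moreover have "(INF u\<in>{v..<T}. f u) = (INF u\<in>{v..<T}. f s)"
    proof (rule INF_cong)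
      fix u assume "u \<in> {v..<T}" then have "u \<in> {s..<T}" using v by auto
      then show "f u = f s" using fc by blast
    qed simp
    ultimately show "(INF u\<in>{v..T}. f u) = min (f s) (f T)" using v by (simp add: min.commute)
  qed
  have M: "(SUP v\<in>{s..T}. min (g v) (INF u\<in>{v..T}. f u)) = max (min (g s) (min (f s) (f T))) (g T)"
  proof -
    have "{s..T} = {s..<T} \<union> {T}" using assms(1,2) gf by auto
    then have "(SUP v\<in>{s..T}. min (g v) (INF u\<in>{v..T}. f u)) =
       max (SUP v\<in>{s..<T}. min (g v) (INF u\<in>{v..T}. f u)) (min (g T) (f T))"
      by (simp add: sup_max max.commute)
    moreover have "(SUP v\<in>{s..<T}. min (g v) (INF u\<in>{v..T}. f u)) = (SUP v\<in>{s..<T}. min (g s) (min (f s) (f T)))"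
    proof (rule SUP_cong)
      fix v assume v: "v \<in> {s..<T}"
      then have "g v = g s" using fc by blast
      then show "min (g v) (INF u\<in>{v..T}. f u) = min (g s) (min (f s) (f T))" using I[OF v] by simp
    qed simp
    ultimately show ?thesis using assms(1,2) gf by (simp add: min_absorb1)
  qed
  have B: "g s \<le> Xg c f g s" "Xg c f g s \<le> f s" using Xg_bounds[of s g f c] assms(1,2) gf by auto
  have "s \<in> {s..<T}" using assms(1,2) gf by auto
  then have Is: "(INF u\<in>{s..T}. f u) = min (f s) (f T)" by (rule I)
  show ?thesis unfolding Xg_semi[OF assms(1) less_imp_le[OF assms(2)]] M Is
    by (rule lin_aux1[OF B])
qed



lemma step_mono:
  fixes h :: "real \<Rightarrow> 'a::linorder"
  assumes st: "s \<le> t"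
    and right: "\<And>T. s \<le> T \<Longrightarrow> T < t \<Longrightarrow> \<exists>\<delta>>0. \<forall>u. T \<le> u \<and> u < T + \<delta> \<longrightarrow> h u = h T"
    and left: "\<And>T. s < T \<Longrightarrow> T \<le> t \<Longrightarrow> \<exists>\<delta>>0. \<exists>c. (\<forall>u. T - \<delta> < u \<and> u < T \<longrightarrow> h u = c) \<and> h T \<le> c"
  shows "h t \<le> h s"
proof -
  define A where "A = {u. s \<le> u \<and> u \<le> t \<and> (\<forall>v. s \<le> v \<and> v \<le> u \<longrightarrow> h v \<le> h s)}"
  define \<sigma> where "\<sigma> = Sup A"
  have sA: "s \<in> A" unfolding A_def using st by auto
  have Ane: "A \<noteq> {}" using sA by auto
  have bdd: "bdd_above A" unfolding A_def by (intro bdd_aboveI[of _ t]) auto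
  have s\<sigma>: "s \<le> \<sigma>" unfolding \<sigma>_def using sA bdd by (rule cSup_upper)
  have \<sigma>t: "\<sigma> \<le> t" unfolding \<sigma>_def using Ane by (rule cSup_least) (auto simp: A_def)
  have c1: "h v \<le> h s" if "s \<le> v" "v < \<sigma>" for v
  proof -
    have "v < Sup A" using that \<sigma>_def by simp
    then obtain a where "a \<in> A" "v < a" using less_cSup_iff[OF Ane bdd] by blast
    then show ?thesis using that unfolding A_def by auto
  qed
  have c2: "h \<sigma> \<le> h s"
  proof (cases "\<sigma> = s")
    case True then show ?thesis by simp
  next
    case False
    then have "s < \<sigma>" using s\<sigma> by auto
    from left[OF this \<sigma>t] obtain \<delta> c where d: "\<delta> > 0" "\<forall>u. \<sigma> - \<delta> < u \<and> u < \<sigma> \<longrightarrow> h u = c" "h \<sigma> \<le> c" by auto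
    define v where "v = max ((s + \<sigma>) / 2) (\<sigma> - \<delta> / 2)"
    have v: "s \<le> v" "v < \<sigma>" "\<sigma> - \<delta> < v" unfolding v_def using \<open>s < \<sigma>\<close> d(1) by (auto simp: max_def)
    then have "h v = c" using d(2) by auto
    then show ?thesis using c1[OF v(1,2)] d(3) by auto
  qed
  have \<sigma>A: "\<sigma> \<in> A" unfolding A_def using s\<sigma> \<sigma>t c1 c2
    by (auto simp: le_less)
  show ?thesis
  proof (cases "\<sigma> < t")
    case True
    from right[OF s\<sigma> True] obtain \<delta> where d: "\<delta> > 0" "\<forall>u. \<sigma> \<le> u \<and> u < \<sigma> + \<delta> \<longrightarrow> h u = h \<sigma>" by auto
    define w where "w = min (\<sigma> + \<delta> / 2) t"
    have w: "\<sigma> < w" "w \<le> t" unfolding w_def using True d(1) by auto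
    have "w \<in> A" unfolding A_def
    proof (intro CollectI conjI allI impI)
      show "s \<le> w" "w \<le> t" using w s\<sigma> by auto
      fix v assume v: "s \<le> v \<and> v \<le> w"
      show "h v \<le> h s"
      proof (cases "v < \<sigma>")
        case True then show ?thesis using c1 v by auto
      next
        case False
        then have "\<sigma> \<le> v" "v < \<sigma> + \<delta>" using d(1) v unfolding w_def by auto
        then have "h v = h \<sigma>" using d(2) by blast
        then show ?thesis using c2 by simp
      qed
    qed
    then have "w \<le> \<sigma>" unfolding \<sigma>_def using bdd by (rule cSup_upper)
    then show ?thesis using w by auto
  next
    case False
    then have "\<sigma> = t" using \<sigma>t by auto
    then show ?thesis using \<sigma>A unfolding A_def using st by auto
  qed
qed

lemma step_mono2:
  fixes h :: "real \<Rightarrow> real"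
  assumes st: "s \<le> t"
    and lim: "\<And>T. s < T \<Longrightarrow> T \<le> t \<Longrightarrow> \<exists>L. (h \<longlongrightarrow> L) (at_left T)"
    and Q: "\<And>\<sigma>. s \<le> \<sigma> \<Longrightarrow> \<sigma> \<le> t \<Longrightarrow> (\<forall>u. \<sigma> < u \<and> u \<le> t \<longrightarrow> h u > h s) \<Longrightarrow> h t \<le> h \<sigma>"
    and J: "\<And>\<sigma>. s < \<sigma> \<Longrightarrow> \<sigma> \<le> t \<Longrightarrow> h \<sigma> > h s \<Longrightarrow> h \<sigma> \<le> Lim (at_left \<sigma>) h"
  shows "h t \<le> h s"
proof (rule ccontr)
  assume "\<not> h t \<le> h s"
  then have ht: "h t > h s" by simp
  define B where "B = {u. s \<le> u \<and> u \<le> t \<and> h u \<le> h s}"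
  define \<sigma> where "\<sigma> = Sup B"
  have sB: "s \<in> B" unfolding B_def using st by auto
  have Bne: "B \<noteq> {}" using sB by auto
  have bdd: "bdd_above B" unfolding B_def by (intro bdd_aboveI[of _ t]) auto
  have s\<sigma>: "s \<le> \<sigma>" unfolding \<sigma>_def using sB bdd by (rule cSup_upper)
  have \<sigma>t: "\<sigma> \<le> t" unfolding \<sigma>_def using Bne by (rule cSup_least) (auto simp: B_def)
  have after: "h u > h s" if "\<sigma> < u" "u \<le> t" for u
  proof (rule ccontr)
    assume "\<not> h u > h s"
    then have "u \<in> B" unfolding B_def using that s\<sigma> by auto
    then have "u \<le> \<sigma>" unfolding \<sigma>_def using bdd by (rule cSup_upper)
    then show False using that by auto
  qed
  have "h t \<le> h \<sigma>" using Q[OF s\<sigma> \<sigma>t] after by auto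
  then have h\<sigma>: "h \<sigma> > h s" using ht by auto
  then have "\<sigma> \<noteq> s" by auto
  then have s\<sigma>': "s < \<sigma>" using s\<sigma> by auto
  obtain L where L: "(h \<longlongrightarrow> L) (at_left \<sigma>)" using lim[OF s\<sigma>' \<sigma>t] by auto
  have LL: "Lim (at_left \<sigma>) h = L" using L by (intro tendsto_Lim) auto
  have "L \<le> h s"
  proof (rule ccontr)
    assume "\<not> L \<le> h s"
    then have "eventually (\<lambda>u. h u > h s) (at_left \<sigma>)" using L by (intro order_tendstoD) auto
    then obtain b where b: "b < \<sigma>" "\<forall>y>b. y < \<sigma> \<longrightarrow> h y > h s"
      using eventually_at_left[OF s\<sigma>'] by auto
    have "max b s < \<sigma>" using b s\<sigma>' by auto
    then obtain a where a: "a \<in> B" "max b s < a" using less_cSup_iff[OF Bne bdd] unfolding \<sigma>_def by auto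
    have "a \<le> \<sigma>" unfolding \<sigma>_def using a(1) bdd by (rule cSup_upper)
    moreover have "a \<noteq> \<sigma>" using a(1) h\<sigma> unfolding B_def by auto
    ultimately have "a < \<sigma>" by auto
    then have "h a > h s" using b a by auto
    then show False using a(1) unfolding B_def by auto
  qed
  then show False using J[OF s\<sigma>' \<sigma>t h\<sigma>] LL h\<sigma> by auto
qed

lemma proj_unique:
  fixes x d1 d2 :: real and L R :: ereal
  assumes "L \<le> ereal (x + d1)" "ereal (x + d1) \<le> R" "ereal (x + d1) < R \<longrightarrow> d1 \<ge> 0" "ereal (x + d1) > L \<longrightarrow> d1 \<le> 0"
    "L \<le> ereal (x + d2)" "ereal (x + d2) \<le> R" "ereal (x + d2) < R \<longrightarrow> d2 \<ge> 0" "ereal (x + d2) > L \<longrightarrow> d2 \<le> 0"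
  shows "d1 = d2"
proof -
  have "\<not> d1 < d2"
  proof
    assume "d1 < d2"
    then have "ereal (x + d1) < ereal (x + d2)" by simp
    then have "ereal (x + d1) < R" "ereal (x + d2) > L" using assms by (auto intro: less_le_trans le_less_trans)
    then show False using assms \<open>d1 < d2\<close> by auto
  qed
  moreover have "\<not> d2 < d1"
  proof
    assume "d2 < d1"
    then have "ereal (x + d2) < ereal (x + d1)" by simp
    then have "ereal (x + d2) < R" "ereal (x + d1) > L" using assms by (auto intro: less_le_trans le_less_trans)
    then show False using assms \<open>d2 < d1\<close> by auto
  qed
  ultimately show ?thesis by auto
qed

lemma E1: "L \<noteq> \<infinity> \<Longrightarrow> L \<le> ereal (p - x) \<longleftrightarrow> ereal x \<le> ereal p - L"
  by (cases L) auto
lemma E2: "L \<noteq> \<infinity> \<Longrightarrow> L < ereal (p - x) \<longleftrightarrow> ereal x < ereal p - L"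
  by (cases L) auto
lemma E3: "R \<noteq> -\<infinity> \<Longrightarrow> ereal (p - x) \<le> R \<longleftrightarrow> ereal p - R \<le> ereal x"
  by (cases R) auto
lemma E4: "R \<noteq> -\<infinity> \<Longrightarrow> ereal (p - x) < R \<longleftrightarrow> ereal p - R < ereal x"
  by (cases R) auto

lemma local_avoid:
  fixes S :: "real set"
  assumes "finite S"
  shows "\<exists>\<delta>>0. \<forall>u. (T < u \<and> u < T + \<delta> \<longrightarrow> u \<notin> S) \<and> (T - \<delta> < u \<and> u < T \<longrightarrow> u \<notin> S)"
proof -
  obtain \<delta> where d: "\<delta> > 0" "\<forall>x\<in>S. x \<noteq> T \<longrightarrow> \<delta> \<le> dist T x" using finite_set_avoid[OF assms] by blast
  show ?thesis
    by (rule exI[of _ \<delta>]) (use d in \<open>auto simp: dist_real_def\<close>)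
qed

lemma finite_img:
  fixes S :: "real set"
  assumes "finite S" and pc: "\<And>a b. 0 \<le> a \<Longrightarrow> a \<le> b \<Longrightarrow> {a<..b} \<inter> S = {} \<Longrightarrow> f a = f b"
    and "0 \<le> t"
  shows "f ` {0..t} \<subseteq> f ` ({0} \<union> S)"
proof
  fix y assume "y \<in> f ` {0..t}"
  then obtain u where u: "u \<in> {0..t}" "y = f u" by auto
  define K where "K = {x \<in> {0} \<union> S. x \<le> u}"
  have K: "finite K" "K \<noteq> {}" unfolding K_def using assms(1) u by auto
  define m where "m = Max K"
  have mK: "m \<in> K" unfolding m_def using K by (rule Max_in)
  have "{m<..u} \<inter> S = {}"
  proof (rule ccontr)
    assume "{m<..u} \<inter> S \<noteq> {}"
    then obtain x where "x \<in> S" "m < x" "x \<le> u" by auto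
    then have "x \<in> K" unfolding K_def by auto
    then have "x \<le> m" unfolding m_def using K by auto
    then show False using \<open>m < x\<close> by auto
  qed
  moreover have "0 \<in> K" unfolding K_def using u by auto
  then have "0 \<le> m" unfolding m_def using K by auto
  moreover have "m \<le> u" using mK unfolding K_def by auto
  ultimately have "f m = f u" using pc by auto
  moreover have "m \<in> {0} \<union> S" using mK unfolding K_def by auto
  ultimately show "y \<in> f ` ({0} \<union> S)" using u by (metis image_eqI)
qed

lemma INF_attained:
  fixes f :: "real \<Rightarrow> ereal"
  assumes "finite (f ` A)" "A \<noteq> {}"
  shows "\<exists>v\<in>A. (INF u\<in>A. f u) = f v"
proof -
  have "(INF u\<in>A. f u) = Min (f ` A)" using assms by (intro cInf_eq_Min) auto
  moreover have "Min (f ` A) \<in> f ` A" using assms by (intro Min_in) auto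
  ultimately show ?thesis by auto
qed

lemma SUP_attained:
  fixes f :: "real \<Rightarrow> ereal"
  assumes "finite (f ` A)" "A \<noteq> {}"
  shows "\<exists>v\<in>A. (SUP u\<in>A. f u) = f v"
proof -
  have "(SUP u\<in>A. f u) = Max (f ` A)" using assms by (intro cSup_eq_Max) auto
  moreover have "Max (f ` A) \<in> f ` A" using assms by (intro Max_in) auto
  ultimately show ?thesis by auto
qed

lemma at0_lemma:
  fixes g0 f0 X :: ereal
  assumes "g0 \<le> f0" "X = max (min (max g0 0) f0) (min g0 f0)"
  shows "(g0 < X \<longrightarrow> X \<le> 0) \<and> (X < f0 \<longrightarrow> 0 \<le> X)"
  using assms by (auto simp: min_def max_def split: if_splits)

lemma jmp_lemma:
  fixes a fT gT X :: ereal
  assumes "X = max (min a fT) gT"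
  shows "(gT < X \<longrightarrow> X \<le> a) \<and> (X < fT \<longrightarrow> a \<le> X)"
  using assms by (auto simp: min_def max_def split: if_splits)



lemma esp_const:
  assumes E: "ESP l r \<psi> \<phi> \<eta>" and ab: "0 \<le> a" "a \<le> b"
    and c: "\<forall>u\<in>{a..b}. \<psi> u = \<psi> a \<and> l u = l a \<and> r u = r a"
  shows "\<eta> b = \<eta> a"
proof -
  have cad: "\<forall>t>0. \<exists>L. (\<eta> \<longlongrightarrow> L) (at_left t)" using E unfolding ESP_def cadlag_def by blast
  have eq: "\<forall>t\<ge>0. \<phi> t = \<psi> t + \<eta> t \<and> l t \<le> ereal (\<phi> t) \<and> ereal (\<phi> t) \<le> r t"
    using E unfolding ESP_def by blast
  have int: "\<forall>s t. 0 \<le> s \<longrightarrow> s \<le> t \<longrightarrow>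
        ((\<forall>u\<in>{s<..t}. ereal (\<phi> u) < r u) \<longrightarrow> \<eta> t - \<eta> s \<ge> 0) \<and>
        ((\<forall>u\<in>{s<..t}. ereal (\<phi> u) > l u) \<longrightarrow> \<eta> t - \<eta> s \<le> 0)"
    using E unfolding ESP_def by blast
  have jmp: "\<forall>t\<ge>0. (ereal (\<phi> t) < r t \<longrightarrow> \<eta> t - left_lim \<eta> t \<ge> 0) \<and>
             (ereal (\<phi> t) > l t \<longrightarrow> \<eta> t - left_lim \<eta> t \<le> 0)"
    using E unfolding ESP_def by blast
  have ll: "left_lim \<eta> t = Lim (at_left t) \<eta>" if "t > 0" for t
    using that unfolding left_lim_def by auto
  have cc: "\<psi> u = \<psi> a" "l u = l a" "r u = r a" if "u \<in> {a..b}" for u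
    using c that by blast+
  have \<phi>u: "\<phi> u = \<psi> a + \<eta> u" if "u \<in> {a..b}" for u
  proof -
    have "\<phi> u = \<psi> u + \<eta> u" using eq that ab by auto
    then show ?thesis using cc(1)[OF that] by simp
  qed
  have \<phi>a: "l a \<le> ereal (\<phi> a)" "ereal (\<phi> a) \<le> r a" using eq ab by auto
  have le: "\<eta> b \<le> \<eta> a"
  proof (rule step_mono2[OF ab(2)])
    fix T assume "a < T" "T \<le> b" then show "\<exists>L. (\<eta> \<longlongrightarrow> L) (at_left T)" using cad ab by auto
  next
    fix \<sigma> assume s: "a \<le> \<sigma>" "\<sigma> \<le> b" and h: "\<forall>u. \<sigma> < u \<and> u \<le> b \<longrightarrow> \<eta> u > \<eta> a"
    have "\<forall>u\<in>{\<sigma><..b}. ereal (\<phi> u) > l u"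
    proof
      fix u assume u: "u \<in> {\<sigma><..b}"
      then have ua: "u \<in> {a..b}" using s by auto
      have "\<phi> u > \<phi> a" using \<phi>u[OF ua] \<phi>u[of a] ab h u by auto
      then have "ereal (\<phi> u) > l a" using \<phi>a(1) le_less_trans[of "l a" "ereal (\<phi> a)" "ereal (\<phi> u)"] by simp
      then show "ereal (\<phi> u) > l u" using cc[OF ua] by simp
    qed
    then show "\<eta> b \<le> \<eta> \<sigma>" using int s ab by force
  next
    fix \<sigma> assume s: "a < \<sigma>" "\<sigma> \<le> b" and h: "\<eta> \<sigma> > \<eta> a"
    have ua: "\<sigma> \<in> {a..b}" using s by auto
    have "\<phi> \<sigma> > \<phi> a" using \<phi>u[OF ua] \<phi>u[of a] ab h by auto
    then have "ereal (\<phi> \<sigma>) > l a" using \<phi>a(1) le_less_trans[of "l a" "ereal (\<phi> a)" "ereal (\<phi> \<sigma>)"] by simp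
    then have "ereal (\<phi> \<sigma>) > l \<sigma>" using cc[OF ua] by simp
    then have "\<eta> \<sigma> - left_lim \<eta> \<sigma> \<le> 0" using jmp s ab by auto
    then show "\<eta> \<sigma> \<le> Lim (at_left \<sigma>) \<eta>" using ll[of \<sigma>] s ab by auto
  qed
  have ge: "- \<eta> b \<le> - \<eta> a"
  proof (rule step_mono2[OF ab(2), where h = "\<lambda>u. - \<eta> u"])
    fix T assume "a < T" "T \<le> b" then show "\<exists>L. ((\<lambda>u. - \<eta> u) \<longlongrightarrow> L) (at_left T)" 
    proof -
      assume "a < T" "T \<le> b"
      then obtain L where "(\<eta> \<longlongrightarrow> L) (at_left T)" using cad ab by force
      then show ?thesis by (intro exI[of _ "-L"] tendsto_minus)
    qed
  next
    fix \<sigma> assume s: "a \<le> \<sigma>" "\<sigma> \<le> b" and h: "\<forall>u. \<sigma> < u \<and> u \<le> b \<longrightarrow> - \<eta> u > - \<eta> a"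
    have "\<forall>u\<in>{\<sigma><..b}. ereal (\<phi> u) < r u"
    proof
      fix u assume u: "u \<in> {\<sigma><..b}"
      then have ua: "u \<in> {a..b}" using s by auto
      have "\<phi> u < \<phi> a" using \<phi>u[OF ua] \<phi>u[of a] ab h u by auto
      then have "ereal (\<phi> u) < r a" using \<phi>a(2) less_le_trans[of "ereal (\<phi> u)" "ereal (\<phi> a)" "r a"] by simp
      then show "ereal (\<phi> u) < r u" using cc[OF ua] by simp
    qed
    then show "- \<eta> b \<le> - \<eta> \<sigma>" using int s ab by force
  next
    fix \<sigma> assume s: "a < \<sigma>" "\<sigma> \<le> b" and h: "- \<eta> \<sigma> > - \<eta> a"
    have ua: "\<sigma> \<in> {a..b}" using s by auto
    have "\<phi> \<sigma> < \<phi> a" using \<phi>u[OF ua] \<phi>u[of a] ab h by auto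
    then have "ereal (\<phi> \<sigma>) < r a" using \<phi>a(2) less_le_trans[of "ereal (\<phi> \<sigma>)" "ereal (\<phi> a)" "r a"] by simp
    then have "ereal (\<phi> \<sigma>) < r \<sigma>" using cc[OF ua] by simp
    then have "\<eta> \<sigma> - left_lim \<eta> \<sigma> \<ge> 0" using jmp s ab by auto
    moreover obtain L where L: "(\<eta> \<longlongrightarrow> L) (at_left \<sigma>)" using cad s ab by force
    moreover have "Lim (at_left \<sigma>) \<eta> = L" using L by (intro tendsto_Lim) auto
    moreover have "Lim (at_left \<sigma>) (\<lambda>u. - \<eta> u) = - L" using L by (intro tendsto_Lim tendsto_minus) auto
    ultimately show "- \<eta> \<sigma> \<le> Lim (at_left \<sigma>) (\<lambda>u. - \<eta> u)" using ll[of \<sigma>] s ab by auto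
  qed
  show ?thesis using le ge by auto
qed

lemma esp_unique:
  assumes E1: "ESP l r \<psi> \<phi>1 \<eta>1" and E2: "ESP l r \<psi> \<phi>2 \<eta>2" and S: "finite S"
    and pc: "\<And>a b. 0 \<le> a \<Longrightarrow> a \<le> b \<Longrightarrow> {a<..b} \<inter> S = {} \<Longrightarrow> \<psi> a = \<psi> b \<and> l a = l b \<and> r a = r b"
  shows "\<forall>t\<ge>0. \<eta>1 t = \<eta>2 t"
proof (rule ccontr)
  assume "\<not> (\<forall>t\<ge>0. \<eta>1 t = \<eta>2 t)"
  define D where "D = {t. 0 \<le> t \<and> \<eta>1 t \<noteq> \<eta>2 t}"
  have Dne: "D \<noteq> {}" using \<open>\<not> _\<close> unfolding D_def by auto
  have bdd: "bdd_below D" unfolding D_def by (intro bdd_belowI[of _ 0]) auto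
  define T where "T = Inf D"
  have T0: "0 \<le> T" unfolding T_def using Dne by (rule cInf_greatest) (auto simp: D_def)
  have before: "\<eta>1 u = \<eta>2 u" if "0 \<le> u" "u < T" for u
  proof (rule ccontr)
    assume "\<eta>1 u \<noteq> \<eta>2 u"
    then have "u \<in> D" using that unfolding D_def by auto
    then have "T \<le> u" unfolding T_def using bdd by (rule cInf_lower)
    then show False using that by auto
  qed
  have cad1: "\<forall>t>0. \<exists>L. (\<eta>1 \<longlongrightarrow> L) (at_left t)" using E1 unfolding ESP_def cadlag_def by blast
  have LL: "left_lim \<eta>1 T = left_lim \<eta>2 T"
  proof (cases "T = 0")
    case True then show ?thesis unfolding left_lim_def by simp
  next
    case False
    then have Tp: "T > 0" using T0 by auto
    obtain L where L: "(\<eta>1 \<longlongrightarrow> L) (at_left T)" using cad1 Tp by auto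
    have ev: "eventually (\<lambda>u. \<eta>1 u = \<eta>2 u) (at_left T)"
      using eventually_at_left_real[OF Tp] by eventually_elim (use before in auto)
    have L2: "(\<eta>2 \<longlongrightarrow> L) (at_left T)" using tendsto_cong[OF ev] L by simp
    have "Lim (at_left T) \<eta>1 = L" "Lim (at_left T) \<eta>2 = L" using L L2 by (auto intro: tendsto_Lim)
    then show ?thesis unfolding left_lim_def using False by simp
  qed
  have atT: "\<eta>1 T = \<eta>2 T"
  proof -
    define x where "x = \<psi> T + left_lim \<eta>1 T"
    have e1: "\<phi>1 T = x + (\<eta>1 T - left_lim \<eta>1 T)" "l T \<le> ereal (\<phi>1 T)" "ereal (\<phi>1 T) \<le> r T"
         "ereal (\<phi>1 T) < r T \<longrightarrow> \<eta>1 T - left_lim \<eta>1 T \<ge> 0"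
         "ereal (\<phi>1 T) > l T \<longrightarrow> \<eta>1 T - left_lim \<eta>1 T \<le> 0"
      using E1 T0 unfolding ESP_def x_def by auto
    have e2: "\<phi>2 T = x + (\<eta>2 T - left_lim \<eta>1 T)" "l T \<le> ereal (\<phi>2 T)" "ereal (\<phi>2 T) \<le> r T"
         "ereal (\<phi>2 T) < r T \<longrightarrow> \<eta>2 T - left_lim \<eta>1 T \<ge> 0"
         "ereal (\<phi>2 T) > l T \<longrightarrow> \<eta>2 T - left_lim \<eta>1 T \<le> 0"
      using E2 T0 LL unfolding ESP_def x_def by auto
    have "\<eta>1 T - left_lim \<eta>1 T = \<eta>2 T - left_lim \<eta>1 T"
      by (rule proj_unique[of "l T" x _ "r T"]) (use e1 e2 in \<open>simp_all\<close>)
    then show ?thesis by simp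
  qed
  obtain \<delta> where d: "\<delta> > 0" "\<forall>u. (T < u \<and> u < T + \<delta> \<longrightarrow> u \<notin> S) \<and> (T - \<delta> < u \<and> u < T \<longrightarrow> u \<notin> S)"
    using local_avoid[OF S] by blast
  have after: "\<eta>1 u = \<eta>2 u" if "T \<le> u" "u < T + \<delta>" for u
  proof -
    have c: "\<forall>v\<in>{T..u}. \<psi> v = \<psi> T \<and> l v = l T \<and> r v = r T"
    proof
      fix v assume v: "v \<in> {T..u}"
      have "{T<..v} \<inter> S = {}" using d(2) v that by fastforce
      then show "\<psi> v = \<psi> T \<and> l v = l T \<and> r v = r T" using pc[of T v] v T0 by auto
    qed
    have "\<eta>1 u = \<eta>1 T" by (rule esp_const[OF E1 T0 that(1) c])
    moreover have "\<eta>2 u = \<eta>2 T" by (rule esp_const[OF E2 T0 that(1) c])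
    ultimately show ?thesis using atT by simp
  qed
  have "Inf D < T + \<delta>" using d(1) T_def by simp
  then obtain e where e: "e \<in> D" "e < T + \<delta>" using cInf_less_iff[OF Dne bdd] by blast
  have "T \<le> e" unfolding T_def using e(1) bdd by (rule cInf_lower)
  then show False using after[OF _ e(2)] e(1) unfolding D_def by auto
qed



theorem proposition2p9:
  fixes l r :: "real \<Rightarrow> ereal" and \<psi> :: "real \<Rightarrow> real"
  assumes l_cadlag: "cadlag l" and l_fin: "\<forall>t\<ge>0. l t \<noteq> \<infinity>"
      and r_cadlag: "cadlag r" and r_fin: "\<forall>t\<ge>0. r t \<noteq> -\<infinity>"
      and psi_cadlag: "cadlag \<psi>"
      and l_pc: "piecewise_const l" and r_pc: "piecewise_const r"
      and psi_pc: "piecewise_const \<psi>"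
      and l_le_r: "\<forall>t\<ge>0. l t \<le> r t"
  shows "(\<forall>t\<ge>0. \<bar>Xi l r \<psi> t\<bar> \<noteq> \<infinity>) \<and>
         ESP l r \<psi> (\<lambda>t. \<psi> t - real_of_ereal (Xi l r \<psi> t)) (\<lambda>t. - real_of_ereal (Xi l r \<psi> t)) \<and>
         (\<forall>\<phi>' \<eta>'. ESP l r \<psi> \<phi>' \<eta>' \<longrightarrow>
            (\<forall>t\<ge>0. \<phi>' t = \<psi> t - real_of_ereal (Xi l r \<psi> t) \<and>
                   \<eta>' t = - real_of_ereal (Xi l r \<psi> t)))"
proof -
  obtain S1 where S1: "finite S1" "\<forall>s t. 0 \<le> s \<longrightarrow> s \<le> t \<longrightarrow> {s<..t} \<inter> S1 = {} \<longrightarrow> l s = l t"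
    using l_pc unfolding piecewise_const_def by blast
  obtain S2 where S2: "finite S2" "\<forall>s t. 0 \<le> s \<longrightarrow> s \<le> t \<longrightarrow> {s<..t} \<inter> S2 = {} \<longrightarrow> r s = r t"
    using r_pc unfolding piecewise_const_def by blast
  obtain S3 where S3: "finite S3" "\<forall>s t. 0 \<le> s \<longrightarrow> s \<le> t \<longrightarrow> {s<..t} \<inter> S3 = {} \<longrightarrow> \<psi> s = \<psi> t"
    using psi_pc unfolding piecewise_const_def by blast
  define S where "S = S1 \<union> S2 \<union> S3"
  have S: "finite S" unfolding S_def using S1 S2 S3 by auto
  have pc: "\<psi> a = \<psi> b \<and> l a = l b \<and> r a = r b" if "0 \<le> a" "a \<le> b" "{a<..b} \<inter> S = {}" for a b
    using that S1(2) S2(2) S3(2) unfolding S_def by blast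
  define f where "f u = ereal (\<psi> u) - l u" for u
  define g where "g u = ereal (\<psi> u) - r u" for u
  define c where "c = max (g 0) 0"
  define X where "X t = Xg c f g t" for t
  have XiX: "Xi l r \<psi> = X"
    by (rule ext) (simp add: Xi_def Xg_def X_def f_def g_def c_def)
  have fgpc: "f a = f b \<and> g a = g b" if "0 \<le> a" "a \<le> b" "{a<..b} \<inter> S = {}" for a b
    using pc[OF that] unfolding f_def g_def by simp
  have gf: "g u \<le> f u" if "0 \<le> u" for u
    unfolding f_def g_def using l_le_r that by (intro ereal_minus_mono) auto
  have fnm: "f u \<noteq> -\<infinity>" if "0 \<le> u" for u
    using l_fin that unfolding f_def by (cases "l u") auto
  have gnp: "g u \<noteq> \<infinity>" if "0 \<le> u" for u
    using r_fin that unfolding g_def by (cases "r u") auto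
  have fin: "\<bar>X t\<bar> \<noteq> \<infinity>" if t: "0 \<le> t" for t
  proof -
    have fi: "finite (f ` {0..t})"
      using finite_subset[OF finite_img[OF S _ t, of f]] fgpc S by blast
    have gi: "finite (g ` {0..t})"
      using finite_subset[OF finite_img[OF S _ t, of g]] fgpc S by blast
    obtain v where v: "v \<in> {0..t}" "(INF u\<in>{0..t}. f u) = f v" using INF_attained[OF fi] t by auto
    obtain w where w: "w \<in> {0..t}" "(SUP u\<in>{0..t}. g u) = g w" using SUP_attained[OF gi] t by auto
    have c0: "0 \<le> c" "c \<noteq> \<infinity>" unfolding c_def using gnp[of 0] by (auto simp: max_def)
    have lo: "min c (f v) \<le> X t" unfolding X_def Xg_def v(2)[symmetric] by (rule max.coboundedI1) simp
    have "(SUP s\<in>{0..t}. min (g s) (INF u\<in>{s..t}. f u)) \<le> (SUP u\<in>{0..t}. g u)"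
      by (rule SUP_mono) (meson min.cobounded1)
    then have hi: "X t \<le> max c (g w)" unfolding X_def Xg_def w(2)[symmetric]
      by (rule max.mono[OF min.cobounded1])
    have "min c (f v) \<noteq> -\<infinity>" using c0 fnm[of v] v(1) by (auto simp: min_def)
    then have "X t \<noteq> -\<infinity>" using lo by auto
    moreover have "max c (g w) \<noteq> \<infinity>" using c0 gnp[of w] w(1) by (auto simp: max_def)
    then have "X t \<noteq> \<infinity>" using hi by auto
    ultimately show ?thesis by auto
  qed
  define x where "x t = real_of_ereal (X t)" for t
  have Xx: "X t = ereal (x t)" if "0 \<le> t" for t
    using fin[OF that] unfolding x_def by (cases "X t") auto
  have rc: "\<exists>\<delta>>0. \<forall>u. T \<le> u \<and> u < T + \<delta> \<longrightarrow> X u = X T" if T: "0 \<le> T" for T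
  proof -
    obtain \<delta> where d: "\<delta> > 0" "\<forall>u. (T < u \<and> u < T + \<delta> \<longrightarrow> u \<notin> S) \<and> (T - \<delta> < u \<and> u < T \<longrightarrow> u \<notin> S)"
      using local_avoid[OF S] by blast
    have "X u = X T" if u: "T \<le> u" "u < T + \<delta>" for u
    proof -
      have fc: "\<forall>v\<in>{T..u}. f v = f T \<and> g v = g T"
      proof
        fix v assume v: "v \<in> {T..u}"
        have "{T<..v} \<inter> S = {}" using d(2) v u by fastforce
        then show "f v = f T \<and> g v = g T" using fgpc[of T v] v T by auto
      qed
      show ?thesis unfolding X_def by (rule Xg_const[OF T u(1) fc gf[OF T]])
    qed
    then show ?thesis using d(1) by blast
  qed
  have lc: "\<exists>s0. 0 \<le> s0 \<and> s0 < T \<and> (\<forall>u. s0 \<le> u \<and> u < T \<longrightarrow> X u = X s0) \<and>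
                X T = max (min (X s0) (f T)) (g T)" if T: "0 < T" for T
  proof -
    obtain \<delta> where d: "\<delta> > 0" "\<forall>u. (T < u \<and> u < T + \<delta> \<longrightarrow> u \<notin> S) \<and> (T - \<delta> < u \<and> u < T \<longrightarrow> u \<notin> S)"
      using local_avoid[OF S] by blast
    define s0 where "s0 = max (T - \<delta> / 2) (T / 2)"
    have s0: "0 \<le> s0" "s0 < T" "T - \<delta> < s0" unfolding s0_def using T d(1) by (auto simp: max_def)
    have fc: "\<forall>v\<in>{s0..u}. f v = f s0 \<and> g v = g s0" if u: "s0 \<le> u" "u < T" for u
    proof
      fix v assume v: "v \<in> {s0..u}"
      have "{s0<..v} \<inter> S = {}" using d(2) v u s0 by fastforce
      then show "f v = f s0 \<and> g v = g s0" using fgpc[of s0 v] v s0 by auto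
    qed
    have const: "\<forall>u. s0 \<le> u \<and> u < T \<longrightarrow> X u = X s0"
      unfolding X_def using Xg_const[OF s0(1) _ fc gf[OF s0(1)]] by blast
    have fc2: "\<forall>u\<in>{s0..<T}. f u = f s0 \<and> g u = g s0"
    proof
      fix u assume u: "u \<in> {s0..<T}"
      then have "s0 \<le> u" "u < T" "u \<in> {s0..u}" by auto
      then show "f u = f s0 \<and> g u = g s0" using fc by blast
    qed
    have "X T = max (min (X s0) (f T)) (g T)"
      unfolding X_def by (rule Xg_jump[OF s0(1,2) fc2 gf[OF s0(1)] gf]) (use T in auto)
    then show ?thesis using s0 const by blast
  qed
  define \<phi> where "\<phi> t = \<psi> t - x t" for t
  define \<eta> where "\<eta> t = - x t" for t
  have xc_right: "((\<lambda>u. x u) \<longlongrightarrow> x T) (at_right T)" if T: "0 \<le> T" for T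
  proof -
    obtain \<delta> where d: "\<delta> > 0" "\<forall>u. T \<le> u \<and> u < T + \<delta> \<longrightarrow> X u = X T" using rc[OF T] by blast
    have "eventually (\<lambda>u. u \<in> {T<..<T+\<delta>}) (at_right T)" using d(1) by (intro eventually_at_right_real) auto
    then have "eventually (\<lambda>u. x u = x T) (at_right T)"
    proof eventually_elim
      case (elim u)
      then have "T \<le> u \<and> u < T + \<delta>" by auto
      then have "X u = X T" using d(2) by blast
      then show ?case by (simp add: x_def)
    qed
    then show ?thesis by (rule tendsto_eventually)
  qed
  have xc_left: "\<exists>s0. 0 \<le> s0 \<and> s0 < T \<and> ((\<lambda>u. x u) \<longlongrightarrow> x s0) (at_left T) \<and>
                (\<forall>u. s0 \<le> u \<and> u < T \<longrightarrow> X u = X s0) \<and> X T = max (min (X s0) (f T)) (g T)" if T: "0 < T" for T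
  proof -
    obtain s0 where s0: "0 \<le> s0" "s0 < T" "\<forall>u. s0 \<le> u \<and> u < T \<longrightarrow> X u = X s0"
       "X T = max (min (X s0) (f T)) (g T)" using lc[OF T] by blast
    have "eventually (\<lambda>u. u \<in> {s0<..<T}) (at_left T)" using s0(2) by (intro eventually_at_left_real)
    then have "eventually (\<lambda>u. x u = x s0) (at_left T)"
    proof eventually_elim
      case (elim u)
      then have "s0 \<le> u \<and> u < T" by auto
      then have "X u = X s0" using s0(3) by blast
      then show ?case by (simp add: x_def)
    qed
    then have "((\<lambda>u. x u) \<longlongrightarrow> x s0) (at_left T)" by (rule tendsto_eventually)
    then show ?thesis using s0 by blast
  qed
  have psi_r: "(\<psi> \<longlongrightarrow> \<psi> t) (at_right t)" if "0 \<le> t" for t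
    using psi_cadlag that unfolding cadlag_def by blast
  have psi_l: "\<exists>L. (\<psi> \<longlongrightarrow> L) (at_left t)" if "0 < t" for t
    using psi_cadlag that unfolding cadlag_def by blast
  have cad_phi: "cadlag \<phi>" unfolding cadlag_def
  proof (intro conjI allI impI)
    fix t :: real assume t: "0 \<le> t"
    show "(\<phi> \<longlongrightarrow> \<phi> t) (at_right t)" unfolding \<phi>_def
      by (intro tendsto_diff psi_r xc_right t)
  next
    fix t :: real assume t: "0 < t"
    obtain L where L: "(\<psi> \<longlongrightarrow> L) (at_left t)" using psi_l[OF t] by blast
    obtain s0 where "((\<lambda>u. x u) \<longlongrightarrow> x s0) (at_left t)" using xc_left[OF t] by blast
    then have "(\<phi> \<longlongrightarrow> L - x s0) (at_left t)" unfolding \<phi>_def using L by (intro tendsto_diff)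
    then show "\<exists>L. (\<phi> \<longlongrightarrow> L) (at_left t)" by blast
  qed
  have cad_eta: "cadlag \<eta>" unfolding cadlag_def
  proof (intro conjI allI impI)
    fix t :: real assume t: "0 \<le> t"
    show "(\<eta> \<longlongrightarrow> \<eta> t) (at_right t)" unfolding \<eta>_def
      by (intro tendsto_minus xc_right t)
  next
    fix t :: real assume t: "0 < t"
    obtain s0 where "((\<lambda>u. x u) \<longlongrightarrow> x s0) (at_left t)" using xc_left[OF t] by blast
    then have "(\<eta> \<longlongrightarrow> - x s0) (at_left t)" unfolding \<eta>_def by (intro tendsto_minus)
    then show "\<exists>L. (\<eta> \<longlongrightarrow> L) (at_left t)" by blast
  qed
  have tr_lo: "l t \<le> ereal (\<phi> t)" if "0 \<le> t" for t
    unfolding \<phi>_def using E1[OF l_fin[rule_format, OF that]] Xg_bounds(2)[of t g f c, OF that gf[OF that]] Xx[OF that]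
    by (simp add: X_def f_def)
  have tr_hi: "ereal (\<phi> t) \<le> r t" if "0 \<le> t" for t
    unfolding \<phi>_def using E3[OF r_fin[rule_format, OF that]] Xg_bounds(1)[of t g f c, OF that gf[OF that]] Xx[OF that]
    by (simp add: X_def g_def)
  have tr_r: "ereal (\<phi> t) < r t \<longleftrightarrow> g t < X t" if "0 \<le> t" for t
    unfolding \<phi>_def using E4[OF r_fin[rule_format, OF that]] Xx[OF that] by (simp add: g_def)
  have tr_l: "ereal (\<phi> t) > l t \<longleftrightarrow> X t < f t" if "0 \<le> t" for t
    unfolding \<phi>_def using E2[OF l_fin[rule_format, OF that]] Xx[OF that] by (simp add: f_def)
  have leX: "x t \<le> x s \<longleftrightarrow> X t \<le> X s" if "0 \<le> s" "0 \<le> t" for s t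
    using Xx[OF that(1)] Xx[OF that(2)] by simp
  have jump: "(ereal (\<phi> t) < r t \<longrightarrow> \<eta> t - left_lim \<eta> t \<ge> 0) \<and>
             (ereal (\<phi> t) > l t \<longrightarrow> \<eta> t - left_lim \<eta> t \<le> 0)" if t: "0 \<le> t" for t
  proof (cases "t = 0")
    case True
    have X0: "X 0 = max (min (max (g 0) 0) (f 0)) (min (g 0) (f 0))"
      unfolding X_def Xg_def c_def by simp
    have "(g 0 < X 0 \<longrightarrow> X 0 \<le> 0) \<and> (X 0 < f 0 \<longrightarrow> 0 \<le> X 0)"
      by (rule at0_lemma[OF gf X0]) simp
    then show ?thesis using True tr_r[of 0] tr_l[of 0] Xx[of 0]
      unfolding left_lim_def \<eta>_def by auto
  next
    case False
    then have tp: "0 < t" using t by auto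
    obtain s0 where s0: "0 \<le> s0" "s0 < t" "((\<lambda>u. x u) \<longlongrightarrow> x s0) (at_left t)"
       "X t = max (min (X s0) (f t)) (g t)" using xc_left[OF tp] by blast
    have "(\<eta> \<longlongrightarrow> - x s0) (at_left t)" unfolding \<eta>_def using s0(3) by (intro tendsto_minus)
    then have ll: "left_lim \<eta> t = - x s0" unfolding left_lim_def using False
      by (simp add: tendsto_Lim)
    have j: "(g t < X t \<longrightarrow> X t \<le> X s0) \<and> (X t < f t \<longrightarrow> X s0 \<le> X t)"
      by (rule jmp_lemma[OF s0(4)])
    show ?thesis using j tr_r[OF t] tr_l[OF t] leX[OF s0(1) t] leX[OF t s0(1)]
      unfolding ll \<eta>_def by auto
  qed
  have intv: "((\<forall>u\<in>{s<..t}. ereal (\<phi> u) < r u) \<longrightarrow> \<eta> t - \<eta> s \<ge> 0) \<and>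
        ((\<forall>u\<in>{s<..t}. ereal (\<phi> u) > l u) \<longrightarrow> \<eta> t - \<eta> s \<le> 0)" if st: "0 \<le> s" "s \<le> t" for s t
  proof (intro conjI impI)
    assume H: "\<forall>u\<in>{s<..t}. ereal (\<phi> u) < r u"
    have "X t \<le> X s"
    proof (rule step_mono[OF st(2)])
      fix T assume "s \<le> T" "T < t"
      then have "0 \<le> T" using st by linarith
      then show "\<exists>\<delta>>0. \<forall>u. T \<le> u \<and> u < T + \<delta> \<longrightarrow> X u = X T" by (rule rc)
    next
      fix T assume T: "s < T" "T \<le> t"
      then have Tp: "0 < T" using st by auto
      obtain s0 where s0: "0 \<le> s0" "s0 < T" "\<forall>u. s0 \<le> u \<and> u < T \<longrightarrow> X u = X s0"
         "X T = max (min (X s0) (f T)) (g T)" using lc[OF Tp] by blast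
      have "g T < X T" using H T tr_r[of T] Tp by auto
      then have "X T \<le> X s0" using jmp_lemma[OF s0(4)] by auto
      moreover have "\<forall>u. T - (T - s0) < u \<and> u < T \<longrightarrow> X u = X s0"
      proof (intro allI impI)
        fix u assume "T - (T - s0) < u \<and> u < T"
        then have "s0 \<le> u \<and> u < T" by auto
        then show "X u = X s0" using s0(3) by blast
      qed
      ultimately show "\<exists>\<delta>>0. \<exists>c. (\<forall>u. T - \<delta> < u \<and> u < T \<longrightarrow> X u = c) \<and> X T \<le> c"
        using s0(2) by (intro exI[of _ "T - s0"] conjI exI[of _ "X s0"]) (simp, blast, blast)
    qed
    then show "\<eta> t - \<eta> s \<ge> 0" using leX[of s t] st unfolding \<eta>_def by auto
  next
    assume H: "\<forall>u\<in>{s<..t}. ereal (\<phi> u) > l u"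
    have "- X t \<le> - X s"
    proof (rule step_mono[OF st(2), where h = "\<lambda>u. - X u"])
      fix T assume "s \<le> T" "T < t"
      then have "0 \<le> T" using st by linarith
      then obtain \<delta> where "\<delta> > 0" "\<forall>u. T \<le> u \<and> u < T + \<delta> \<longrightarrow> X u = X T" using rc by blast
      then show "\<exists>\<delta>>0. \<forall>u. T \<le> u \<and> u < T + \<delta> \<longrightarrow> - X u = - X T" by (metis ereal_uminus_uminus)
    next
      fix T assume T: "s < T" "T \<le> t"
      then have Tp: "0 < T" using st by auto
      obtain s0 where s0: "0 \<le> s0" "s0 < T" "\<forall>u. s0 \<le> u \<and> u < T \<longrightarrow> X u = X s0"
         "X T = max (min (X s0) (f T)) (g T)" using lc[OF Tp] by blast
      have "X T < f T" using H T tr_l[of T] Tp by auto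
      then have "X s0 \<le> X T" using jmp_lemma[OF s0(4)] by auto
      then have "- X T \<le> - X s0" by simp
      moreover have "\<forall>u. T - (T - s0) < u \<and> u < T \<longrightarrow> - X u = - X s0"
      proof (intro allI impI)
        fix u assume "T - (T - s0) < u \<and> u < T"
        then have "s0 \<le> u \<and> u < T" by auto
        then have "X u = X s0" using s0(3) by blast
        then show "- X u = - X s0" by simp
      qed
      ultimately show "\<exists>\<delta>>0. \<exists>c. (\<forall>u. T - \<delta> < u \<and> u < T \<longrightarrow> - X u = c) \<and> - X T \<le> c"
        using s0(2) by (intro exI[of _ "T - s0"] conjI exI[of _ "- X s0"]) (simp, blast, blast)
    qed
    then have "X s \<le> X t" by simp
    then show "\<eta> t - \<eta> s \<le> 0" using leX[of t s] st unfolding \<eta>_def by auto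
  qed
  have ESPc: "ESP l r \<psi> \<phi> \<eta>"
    unfolding ESP_def
  proof (intro conjI cad_phi cad_eta allI impI)
    fix t :: real assume t: "0 \<le> t"
    show "\<phi> t = \<psi> t + \<eta> t" unfolding \<phi>_def \<eta>_def by simp
    show "l t \<le> ereal (\<phi> t)" by (rule tr_lo[OF t])
    show "ereal (\<phi> t) \<le> r t" by (rule tr_hi[OF t])
  next
    fix s t :: real assume "0 \<le> s" "s \<le> t"
    then show "(\<forall>u\<in>{s<..t}. ereal (\<phi> u) < r u) \<Longrightarrow> \<eta> t - \<eta> s \<ge> 0"
      "(\<forall>u\<in>{s<..t}. ereal (\<phi> u) > l u) \<Longrightarrow> \<eta> t - \<eta> s \<le> 0" using intv by blast+
  next
    fix t :: real assume "0 \<le> t"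
    then show "ereal (\<phi> t) < r t \<Longrightarrow> \<eta> t - left_lim \<eta> t \<ge> 0"
      "ereal (\<phi> t) > l t \<Longrightarrow> \<eta> t - left_lim \<eta> t \<le> 0" using jump by blast+
  qed
  have uniq: "\<forall>t\<ge>0. \<phi>' t = \<psi> t - x t \<and> \<eta>' t = - x t" if E': "ESP l r \<psi> \<phi>' \<eta>'" for \<phi>' \<eta>'
  proof (intro allI impI)
    fix t :: real assume t: "0 \<le> t"
    have "\<forall>t\<ge>0. \<eta>' t = \<eta> t" by (rule esp_unique[OF E' ESPc S pc]) auto
    then have "\<eta>' t = - x t" using t unfolding \<eta>_def by auto
    moreover have "\<phi>' t = \<psi> t + \<eta>' t" using E' t unfolding ESP_def by blast
    ultimately show "\<phi>' t = \<psi> t - x t \<and> \<eta>' t = - x t" by simp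
  qed
  have phidef: "(\<lambda>t. \<psi> t - real_of_ereal (Xi l r \<psi> t)) = \<phi>" unfolding XiX \<phi>_def x_def by simp
  have etadef: "(\<lambda>t. - real_of_ereal (Xi l r \<psi> t)) = \<eta>" unfolding XiX \<eta>_def x_def by simp
  show ?thesis unfolding phidef etadef using fin ESPc uniq unfolding XiX x_def by blast
qed


end
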